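(* Let $B_J\in\mathbb R^{n\times n}$ satisfy $B_J\ge O$ elementwise and let $\mathcal B=(B_1,\dots,B_d)$ be a splitting of $B_J$. Assume $\lambda:=\rho(T(\mathcal B))>0$. Then $T(\mathcal B)$ has a nonnegative eigenvector $[\alpha_1^T,\dots,\alpha_d^T]^T$ (with $\alpha_p\in\mathbb R^n$) for the eigenvalue $\lambda$ such that, elementwise, $0\le\lambda\alpha_1\le\alpha_d\le\alpha_{d-1}\le\cdots\le\alpha_2\le\alpha_1$ if $\lambda\le1$, and $0\le\alpha_1\le\alpha_2\le\cdots\le\alpha_{d-1}\le\alpha_d\le\lambda\alpha_1$ if $\lambda\ge1$.
   Context: For $B\in\mathbb R^{n\times n}$, a splitting of $B$ of order $d\ge1$ is an ordered $d$-tuple $\mathcal B=(B_1,\dots,B_d)$ of real $n\times n$ matrices with $B_p\neq O$ for all $p$, $\sum_{p=1}^d B_p=B$, and $B_p\circ B_q=O$ (Hadamard product) for $p\ne q$. The iteration matrix of $\mathcal B$ is the $dn\times dn$ matrix $T(\mathcal B)=(I_{dn}-\mathcal L)^{-1}\mathcal U$, where $\mathcal L,\mathcal U$ are $d\times d$ block matrices with $n\times n$ blocks, $\mathcal L_{ij}=B_j$ if $i>j$ and $O$ otherwise, $\mathcal U_{ij}=B_j$ if $i\le j$ and $O$ otherwise. $\rho$ denotes spectral radius; inequalities between vectors/matrices are elementwise. *)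

theory Defs
  imports "Jordan_Normal_Form.Spectral_Radius"
begin

definition is_splitting :: "nat \<Rightarrow> real mat \<Rightarrow> real mat list \<Rightarrow> bool" where
  "is_splitting n B Bs \<longleftrightarrow>
     length Bs \<ge> 1 \<and>
     (\<forall>p < length Bs. Bs ! p \<in> carrier_mat n n \<and> Bs ! p \<noteq> 0\<^sub>m n n) \<and>
     B = foldr (+) Bs (0\<^sub>m n n) \<and>
     (\<forall>p < length Bs. \<forall>q < length Bs. p \<noteq> q \<longrightarrow>
        (\<forall>i < n. \<forall>j < n. (Bs ! p) $$ (i, j) * (Bs ! q) $$ (i, j) = 0))"

text \<open>Block lower part L: block (i,j) is B_j if i > j, else O (blocks 0-indexed).\<close>
definition blockL :: "nat \<Rightarrow> real mat list \<Rightarrow> real mat" where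
  "blockL n Bs = mat (length Bs * n) (length Bs * n)
     (\<lambda>(r, c). if r div n > c div n then (Bs ! (c div n)) $$ (r mod n, c mod n) else 0)"

text \<open>Block upper part U: block (i,j) is B_j if i \<le> j, else O.\<close>
definition blockU :: "nat \<Rightarrow> real mat list \<Rightarrow> real mat" where
  "blockU n Bs = mat (length Bs * n) (length Bs * n)
     (\<lambda>(r, c). if r div n \<le> c div n then (Bs ! (c div n)) $$ (r mod n, c mod n) else 0)"

definition inv_mat :: "real mat \<Rightarrow> real mat" where
  "inv_mat M = (THE N. N \<in> carrier_mat (dim_row M) (dim_row M) \<and>
                   M * N = 1\<^sub>m (dim_row M) \<and> N * M = 1\<^sub>m (dim_row M))"

definition iter_mat :: "nat \<Rightarrow> real mat list \<Rightarrow> real mat" where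
  "iter_mat n Bs = inv_mat (1\<^sub>m (length Bs * n) - blockL n Bs) * blockU n Bs"

definition rho :: "real mat \<Rightarrow> real" where
  "rho M = spectral_radius (map_mat complex_of_real M)"

end

theory Submission
  imports Defs
begin

lemma mv_index:
  assumes "M \<in> carrier_mat n m" "v \<in> carrier_vec m" "i < n"
  shows "(M *\<^sub>v v) $ i = (\<Sum>j<m. M $$ (i,j) * v $ j)"
  using assms by (auto simp: scalar_prod_def lessThan_atLeast0 intro!: sum.cong)

lemma pow_mat_Suc_left:
  assumes "A \<in> carrier_mat n n"
  shows "A ^\<^sub>m Suc k = A * A ^\<^sub>m k"
proof (induction k)
  case 0 then show ?case using assms by simp
next
  case (Suc k)
  have "A ^\<^sub>m Suc (Suc k) = (A * A ^\<^sub>m k) * A" using Suc by simp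
  also have "\<dots> = A * (A ^\<^sub>m k * A)"
    using assms by (intro assoc_mult_mat[of _ n n _ n _ n]) auto
  finally show ?case by simp
qed

fun iter :: "(nat \<Rightarrow> nat \<Rightarrow> real) \<Rightarrow> nat \<Rightarrow> (nat \<Rightarrow> real) \<Rightarrow> nat \<Rightarrow> nat \<Rightarrow> real" where
  "iter a n x 0 = x"
| "iter a n x (Suc k) = (\<lambda>i. \<Sum>j<n. a i j * iter a n x k j)"

lemma iter_mat:
  assumes "i < n"
  shows "iter a n x k i = ((mat n n (\<lambda>(i,j). a i j)) ^\<^sub>m k *\<^sub>v vec n x) $ i"
  using assms
proof (induction k arbitrary: i)
  case 0
  then show ?case by simp
next
  case (Suc k)
  let ?M = "mat n n (\<lambda>(i,j). a i j)"
  have M: "?M \<in> carrier_mat n n" by simp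
  have "(?M ^\<^sub>m Suc k *\<^sub>v vec n x) = ?M *\<^sub>v (?M ^\<^sub>m k *\<^sub>v vec n x)"
    unfolding pow_mat_Suc_left[OF M]
    by (rule assoc_mult_mat_vec[of _ n n _ n]) auto
  also have "\<dots> $ i = (\<Sum>j<n. ?M $$ (i,j) * (?M ^\<^sub>m k *\<^sub>v vec n x) $ j)"
    by (rule mv_index[OF M _ Suc.prems], rule mult_mat_vec_carrier[of _ n n], rule pow_carrier_mat[OF M], simp)
  also have "\<dots> = (\<Sum>j<n. a i j * (?M ^\<^sub>m k *\<^sub>v vec n x) $ j)"
    using Suc.prems by (intro sum.cong) auto
  also have "\<dots> = (\<Sum>j<n. a i j * iter a n x k j)"
    using Suc.IH by (intro sum.cong) auto
  finally show ?case by simp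
qed

lemma iter_div:
  "iter (\<lambda>i j. a i j / q) n x k i = iter a n x k i / q ^ k"
proof (induction k arbitrary: i)
  case 0 then show ?case by simp
next
  case (Suc k)
  then show ?case by (simp add: sum_divide_distrib)
qed

lemma bw_multi:
  fixes f :: "nat \<Rightarrow> nat \<Rightarrow> real"
  shows "(\<forall>j i. i < m \<longrightarrow> \<bar>f j i\<bar> \<le> B) \<Longrightarrow> \<exists>h. strict_mono h \<and> (\<forall>i<m. convergent (\<lambda>j. f (h j) i))"
proof (induction m)
  case 0
  then show ?case by (intro exI[of _ id]) (auto simp: strict_mono_def)
next
  case (Suc m)
  then obtain h where h: "strict_mono h" "\<forall>i<m. convergent (\<lambda>j. f (h j) i)" by auto
  obtain g where g: "strict_mono g" "monoseq (\<lambda>j. f (h (g j)) m)"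
    using seq_monosub[of "\<lambda>j. f (h j) m"] by auto
  have "Bseq (\<lambda>j. f (h (g j)) m)"
    using Suc.prems by (intro BseqI'[of _ B]) auto
  then have cm: "convergent (\<lambda>j. f (h (g j)) m)"
    using g(2) Bseq_monoseq_convergent by blast
  have "strict_mono (h \<circ> g)" using h(1) g(1) by (simp add: strict_mono_o)
  moreover have "\<forall>i<Suc m. convergent (\<lambda>j. f ((h \<circ> g) j) i)"
  proof (intro allI impI)
    fix i assume "i < Suc m"
    show "convergent (\<lambda>j. f ((h \<circ> g) j) i)"
    proof (cases "i < m")
      case True
      then obtain l where "(\<lambda>j. f (h j) i) \<longlonglongrightarrow> l" using h(2) convergent_def by blast
      then have "(\<lambda>j. f (h (g j)) i) \<longlonglongrightarrow> l" using LIMSEQ_subseq_LIMSEQ[OF _ g(1)] by (auto simp: o_def)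
      then show ?thesis by (auto simp: convergent_def)
    next
      case False
      then have "i = m" using \<open>i < Suc m\<close> by auto
      then show ?thesis using cm by simp
    qed
  qed
  ultimately show ?case by blast
qed

lemma iter_nonneg:
  assumes "\<And>i j. i < n \<Longrightarrow> j < n \<Longrightarrow> a i j \<ge> 0" "\<And>i. i < n \<Longrightarrow> x i \<ge> 0" "i < n"
  shows "iter a n x k i \<ge> 0"
  using assms(3)
proof (induction k arbitrary: i)
  case 0 then show ?case using assms by simp
next
  case (Suc k) then show ?case using assms by (auto intro!: sum_nonneg)
qed

lemma iter_mono:
  assumes "\<And>i j. i < n \<Longrightarrow> j < n \<Longrightarrow> a i j \<ge> 0"
    "\<And>i. i < n \<Longrightarrow> (\<Sum>j<n. a i j * x j) \<ge> x i" "i < n"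
  shows "iter a n x (Suc k) i \<ge> iter a n x k i"
  using assms(3)
proof (induction k arbitrary: i)
  case 0 then show ?case using assms by simp
next
  case (Suc k)
  have "iter a n x (Suc k) i = (\<Sum>j<n. a i j * iter a n x k j)" by simp
  also have "\<dots> \<le> (\<Sum>j<n. a i j * iter a n x (Suc k) j)"
    using Suc assms(1) by (intro sum_mono mult_left_mono) auto
  finally show ?case by simp
qed

lemma pf_weak:
  fixes A :: "real mat"
  assumes A: "A \<in> carrier_mat n n" and n: "n > 0"
    and nonneg: "\<And>i j. i < n \<Longrightarrow> j < n \<Longrightarrow> A $$ (i,j) \<ge> 0"
    and pos: "rho A > 0"
  shows "\<exists>v. v \<in> carrier_vec n \<and> v \<noteq> 0\<^sub>v n \<and> A *\<^sub>v v = rho A \<cdot>\<^sub>v v \<and> (\<forall>i<n. v $ i \<ge> 0)"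
proof -
  define \<rho> where "\<rho> = rho A"
  define CA where "CA = map_mat complex_of_real A"
  have CA: "CA \<in> carrier_mat n n" using A by (simp add: CA_def)
  have \<rho>CA: "\<rho> = spectral_radius CA" by (simp add: \<rho>_def CA_def rho_def)
  have \<rho>pos: "\<rho> > 0" using pos \<rho>_def by simp
  have ev_bound: "cmod ev \<le> \<rho>" if "eigenvalue CA ev" for ev
    using spectral_radius_mem_max(2)[OF CA n, of "cmod ev"] that \<rho>CA by (auto simp: spectrum_def)
  obtain \<mu> where "\<mu> \<in> spectrum CA" and mu: "cmod \<mu> = \<rho>"
    using spectral_radius_mem_max(1)[OF CA n] \<rho>CA by auto
  then obtain z where z: "eigenvector CA z \<mu>" by (auto simp: spectrum_def eigenvalue_def)
  then have zc: "z \<in> carrier_vec n" and z0: "z \<noteq> 0\<^sub>v n" and zev: "CA *\<^sub>v z = \<mu> \<cdot>\<^sub>v z"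
    using CA by (auto simp: eigenvector_def)
  define x where "x j = cmod (z $ j)" for j
  have x_nonneg: "x j \<ge> 0" for j by (simp add: x_def)
  obtain i0 where i0: "i0 < n" "z $ i0 \<noteq> 0"
  proof -
    have "\<exists>i<n. z $ i \<noteq> 0"
    proof (rule ccontr)
      assume "\<not> ?thesis"
      then have "z = 0\<^sub>v n" using zc by (intro eq_vecI) auto
      then show False using z0 by simp
    qed
    then show ?thesis using that by blast
  qed
  have x_pos: "x i0 > 0" using i0 by (simp add: x_def)
  have Ax: "(\<Sum>j<n. A $$ (i,j) * x j) \<ge> \<rho> * x i" if i: "i < n" for i
  proof -
    have "\<mu> * z $ i = (CA *\<^sub>v z) $ i" using zev i zc by simp
    also have "\<dots> = (\<Sum>j<n. CA $$ (i,j) * z $ j)" by (rule mv_index[OF CA zc i])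
    also have "\<dots> = (\<Sum>j<n. complex_of_real (A $$ (i,j)) * z $ j)"
      using A i by (intro sum.cong) (auto simp: CA_def)
    finally have eq: "\<mu> * z $ i = (\<Sum>j<n. complex_of_real (A $$ (i,j)) * z $ j)" .
    have "\<rho> * x i = cmod (\<mu> * z $ i)" by (simp add: x_def norm_mult mu)
    also have "\<dots> \<le> (\<Sum>j<n. cmod (complex_of_real (A $$ (i,j)) * z $ j))" unfolding eq by (rule norm_sum)
    also have "\<dots> = (\<Sum>j<n. A $$ (i,j) * x j)"
      using nonneg i by (intro sum.cong) (auto simp: norm_mult x_def)
    finally show ?thesis .
  qed
  define a where "a i j = A $$ (i,j) / \<rho>" for i j
  have a_nonneg: "a i j \<ge> 0" if "i < n" "j < n" for i j using nonneg[OF that] \<rho>pos by (simp add: a_def)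
  have ax: "(\<Sum>j<n. a i j * x j) \<ge> x i" if "i < n" for i
  proof -
    have "(\<Sum>j<n. a i j * x j) = (\<Sum>j<n. A $$ (i,j) * x j) / \<rho>" by (simp add: a_def sum_divide_distrib)
    also have "\<dots> \<ge> \<rho> * x i / \<rho>" using Ax[OF that] \<rho>pos by (intro divide_right_mono) auto
    finally show ?thesis using \<rho>pos by simp
  qed
  define it where "it = iter a n x"
  have it_nonneg: "it k i \<ge> 0" if "i < n" for k i
    unfolding it_def by (rule iter_nonneg) (use a_nonneg x_nonneg that in auto)
  have it_mono: "it k i \<le> it (Suc k) i" if "i < n" for k i
    unfolding it_def by (rule iter_mono) (use a_nonneg ax that in auto)
  define s where "s k = (\<Sum>i<n. it k i)" for k
  have s0: "s 0 = (\<Sum>i<n. x i)" by (simp add: s_def it_def)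
  have s0pos: "s 0 > 0"
  proof -
    have "x i0 \<le> (\<Sum>i<n. x i)" using i0 x_nonneg by (intro member_le_sum) auto
    then show ?thesis using x_pos s0 by simp
  qed
  have s_mono: "s k \<le> s (Suc k)" for k unfolding s_def by (intro sum_mono it_mono) auto
  have s_pos: "s k > 0" for k
    using lift_Suc_mono_le[of s, OF s_mono, of 0 k] s0pos by simp
  have it_le_s: "it k i \<le> s k" if "i < n" for k i
    unfolding s_def using that it_nonneg by (intro member_le_sum) auto
  have it_Suc: "it (Suc k) i = (\<Sum>j<n. a i j * it k j)" for k i by (simp add: it_def)
  have growth: "\<exists>C. \<forall>k. s k \<le> C * q ^ k" if q: "q > 1" for q
  proof -
    define Mq where "Mq = mat n n (\<lambda>(i,j). a i j / q)"
    define CM where "CM = map_mat complex_of_real Mq"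
    have Mq: "Mq \<in> carrier_mat n n" by (simp add: Mq_def)
    have CM: "CM \<in> carrier_mat n n" by (simp add: CM_def Mq_def)
    have "spectral_radius CM < 1"
    proof -
      have evb: "cmod ev \<le> 1 / q" if ev: "ev \<in> spectrum CM" for ev
      proof -
        obtain v where v: "eigenvector CM v ev" using ev by (auto simp: spectrum_def eigenvalue_def)
        then have vc: "v \<in> carrier_vec n" and v0: "v \<noteq> 0\<^sub>v n" and vev: "CM *\<^sub>v v = ev \<cdot>\<^sub>v v"
          using CM by (auto simp: eigenvector_def)
        have "CA *\<^sub>v v = (ev * complex_of_real (\<rho> * q)) \<cdot>\<^sub>v v"
        proof (rule eq_vecI)
          fix i assume "i < dim_vec ((ev * complex_of_real (\<rho> * q)) \<cdot>\<^sub>v v)"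
          then have i: "i < n" using vc by simp
          have "(CA *\<^sub>v v) $ i = (\<Sum>j<n. CA $$ (i,j) * v $ j)" by (rule mv_index[OF CA vc i])
          also have "\<dots> = complex_of_real (\<rho> * q) * (\<Sum>j<n. CM $$ (i,j) * v $ j)"
            unfolding sum_distrib_left using i \<rho>pos q A
            by (intro sum.cong) (auto simp: CA_def CM_def Mq_def a_def)
          also have "(\<Sum>j<n. CM $$ (i,j) * v $ j) = (CM *\<^sub>v v) $ i" by (rule mv_index[OF CM vc i, symmetric])
          also have "\<dots> = ev * v $ i" using vev i vc by simp
          finally show "(CA *\<^sub>v v) $ i = ((ev * complex_of_real (\<rho> * q)) \<cdot>\<^sub>v v) $ i"
            using i vc by (simp add: mult.commute mult.left_commute)
        qed (use CA vc in simp)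
        then have "eigenvalue CA (ev * complex_of_real (\<rho> * q))"
          using vc v0 CA unfolding eigenvalue_def eigenvector_def by auto
        then have "cmod (ev * complex_of_real (\<rho> * q)) \<le> \<rho>" by (rule ev_bound)
        then have "cmod ev * (\<rho> * q) \<le> \<rho>" using \<rho>pos q by (simp add: norm_mult)
        then have "cmod ev * q \<le> 1" using \<rho>pos by (simp add: mult.commute mult.left_commute)
        then show ?thesis using q by (simp add: field_simps)
      qed
      have "spectral_radius CM \<in> norm ` spectrum CM" by (rule spectral_radius_mem_max(1)[OF CM n])
      then have "spectral_radius CM \<le> 1/q" using evb by auto
      also have "\<dots> < 1" using q by simp
      finally show ?thesis .
    qed
    then obtain c where c: "\<And>k. norm_bound (CM ^\<^sub>m k) c"
      using spectral_radius_jnf_norm_bound_less_1_upper_triangular[OF CM] by auto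
    have Mqb: "\<bar>(Mq ^\<^sub>m k) $$ (i,j)\<bar> \<le> c" if "i < n" "j < n" for k i j
    proof -
      have eq: "CM ^\<^sub>m k = map_mat complex_of_real (Mq ^\<^sub>m k)"
        unfolding CM_def by (rule of_real_hom.mat_hom_pow[OF Mq, symmetric])
      have "norm ((CM ^\<^sub>m k) $$ (i,j)) \<le> c" using c[of k] that CM unfolding norm_bound_def by auto
      then show ?thesis unfolding eq using that Mq by simp
    qed
    have "s k \<le> (real n * c * s 0) * q ^ k" for k
    proof -
      have itq: "it k i = q ^ k * ((Mq ^\<^sub>m k *\<^sub>v vec n x) $ i)" if i: "i < n" for i
      proof -
        have "iter (\<lambda>i j. a i j / q) n x k i = it k i / q ^ k" unfolding it_def by (rule iter_div)
        moreover have "iter (\<lambda>i j. a i j / q) n x k i = (Mq ^\<^sub>m k *\<^sub>v vec n x) $ i"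
          unfolding Mq_def by (rule iter_mat[OF i])
        ultimately show ?thesis using q by (simp add: field_simps)
      qed
      have bd: "(Mq ^\<^sub>m k *\<^sub>v vec n x) $ i \<le> c * s 0" if i: "i < n" for i
      proof -
        have "(Mq ^\<^sub>m k *\<^sub>v vec n x) $ i = (\<Sum>j<n. (Mq ^\<^sub>m k) $$ (i,j) * vec n x $ j)"
          by (rule mv_index[OF pow_carrier_mat[OF Mq] _ i]) simp
        also have "\<dots> = (\<Sum>j<n. (Mq ^\<^sub>m k) $$ (i,j) * x j)" by (intro sum.cong) auto
        also have "\<dots> \<le> (\<Sum>j<n. c * x j)"
        proof (intro sum_mono)
          fix j assume "j \<in> {..<n}"
          then have "(Mq ^\<^sub>m k) $$ (i,j) \<le> c" using Mqb[of i j k] i by auto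
          then show "(Mq ^\<^sub>m k) $$ (i,j) * x j \<le> c * x j" using x_nonneg by (intro mult_right_mono) auto
        qed
        also have "\<dots> = c * s 0" by (simp add: s0 sum_distrib_left)
        finally show ?thesis .
      qed
      have "s k = (\<Sum>i<n. q ^ k * ((Mq ^\<^sub>m k *\<^sub>v vec n x) $ i))" unfolding s_def by (intro sum.cong) (auto simp: itq)
      also have "\<dots> \<le> (\<Sum>i<n. q ^ k * (c * s 0))"
        using bd q by (intro sum_mono mult_left_mono) auto
      also have "\<dots> = (real n * c * s 0) * q ^ k" by simp
      finally show ?thesis .
    qed
    then show ?thesis by blast
  qed
  have ratio: "\<exists>k. s (Suc k) < (1 + \<delta>) * s k" if \<delta>: "\<delta> > 0" for \<delta>
  proof (rule ccontr)
    assume "\<not> ?thesis"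
    then have ge: "s (Suc k) \<ge> (1 + \<delta>) * s k" for k by (simp add: not_less)
    have low: "s k \<ge> (1 + \<delta>) ^ k * s 0" for k
    proof (induction k)
      case (Suc k)
      have "(1+\<delta>)^Suc k * s 0 = (1+\<delta>) * ((1+\<delta>)^k * s 0)" by simp
      also have "\<dots> \<le> (1+\<delta>) * s k" using Suc \<delta> by (intro mult_left_mono) auto
      also have "\<dots> \<le> s (Suc k)" by (rule ge)
      finally show ?case .
    qed simp
    define q where "q = 1 + \<delta>/2"
    have q: "q > 1" using \<delta> by (simp add: q_def)
    obtain C where C: "\<And>k. s k \<le> C * q ^ k" using growth[OF q] by auto
    have r1: "(1 + \<delta>) / q > 1" using \<delta> by (simp add: q_def field_simps)
    obtain k where k: "C / s 0 < ((1 + \<delta>) / q) ^ k" using real_arch_pow[OF r1] by auto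
    have "((1 + \<delta>) / q) ^ k * s 0 * q^k = (1+\<delta>)^k * s 0" using q by (simp add: power_divide)
    also have "\<dots> \<le> C * q ^ k" using low[of k] C[of k] by linarith
    finally have "(((1 + \<delta>) / q) ^ k * s 0) * q^k \<le> C * q ^ k" .
    then have "((1 + \<delta>) / q) ^ k * s 0 \<le> C" using q by simp
    then show False using k s0pos by (simp add: field_simps)
  qed
  define kj where "kj j = (SOME k. s (Suc k) < (1 + 1 / real (Suc j)) * s k)" for j
  have kj: "s (Suc (kj j)) < (1 + 1 / real (Suc j)) * s (kj j)" for j
    unfolding kj_def by (rule someI_ex, rule ratio) simp
  define v where "v j i = it (kj j) i / s (kj j)" for j i
  define w where "w j i = it (Suc (kj j)) i / s (Suc (kj j))" for j i
  define r where "r j = s (Suc (kj j)) / s (kj j)" for j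
  have r_ge: "r j \<ge> 1" for j using s_mono s_pos by (simp add: r_def)
  have r_lt: "r j < 1 + inverse (real (Suc j))" for j
    using kj[of j] s_pos[of "kj j"] by (simp add: r_def field_simps)
  have v_bd: "\<bar>v j i\<bar> \<le> 1" if "i < n" for j i
    using it_le_s[OF that, of "kj j"] it_nonneg[OF that, of "kj j"] s_pos[of "kj j"]
    by (simp add: v_def divide_le_eq_1)
  have vw: "\<bar>v j i - w j i\<bar> \<le> r j - 1" if i: "i < n" for j i
  proof -
    define k where "k = kj j"
    define X where "X = it k i"
    define X' where "X' = it (Suc k) i"
    define S where "S = s k"
    define S' where "S' = s (Suc k)"
    have XX: "X \<le> X'" using it_mono[OF i] by (simp add: X_def X'_def)
    have X0: "0 \<le> X" using it_nonneg[OF i] by (simp add: X_def)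
    have X'S: "X' \<le> S'" using it_le_s[OF i] by (simp add: X'_def S'_def)
    have diff: "X' - X \<le> S' - S"
    proof -
      have "S' - S = (\<Sum>l<n. it (Suc k) l - it k l)" by (simp add: S_def S'_def s_def sum_subtractf)
      moreover have "it (Suc k) i - it k i \<le> (\<Sum>l<n. it (Suc k) l - it k l)"
        using i it_mono by (intro member_le_sum) auto
      ultimately show ?thesis by (simp add: X_def X'_def)
    qed
    have S: "S > 0" "S \<le> S'" using s_pos s_mono by (auto simp: S_def S'_def)
    have eqs: "v j i = X / S" "w j i = X' / S'" "r j = S' / S"
      by (simp_all add: v_def w_def r_def X_def X'_def S_def S'_def k_def)
    have 1: "X' / S' - X / S \<le> S' / S - 1"
    proof -
      have "X' / S' \<le> X' / S" using S X0 XX by (intro divide_left_mono) auto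
      then have "X' / S' - X / S \<le> (X' - X) / S" by (simp add: diff_divide_distrib)
      also have "\<dots> \<le> (S' - S) / S" using diff S by (intro divide_right_mono) auto
      also have "\<dots> = S' / S - 1" using S by (simp add: field_simps)
      finally show ?thesis .
    qed
    have 2: "X / S - X' / S' \<le> S' / S - 1"
    proof -
      have "X / S \<le> X' / S" using XX S by (intro divide_right_mono) auto
      then have "X / S - X' / S' \<le> X' / S - X' / S'" by (rule diff_right_mono)
      also have "\<dots> = X' * (S' - S) / (S * S')" using S by (simp add: field_simps)
      also have "\<dots> \<le> S' * (S' - S) / (S * S')"
        using S X'S by (intro divide_right_mono mult_right_mono) auto
      also have "\<dots> = S' / S - 1" using S by (simp add: field_simps)
      finally show ?thesis .
    qed
    show ?thesis unfolding eqs using 1 2 by linarith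
  qed
  have Av: "(\<Sum>l<n. a i l * v j l) = r j * w j i" for i j
  proof -
    have "(\<Sum>l<n. a i l * v j l) = it (Suc (kj j)) i / s (kj j)"
      by (simp add: v_def it_Suc sum_divide_distrib)
    also have "\<dots> = r j * w j i" using s_pos[of "kj j"] s_pos[of "Suc (kj j)"] by (simp add: r_def w_def)
    finally show ?thesis .
  qed
  have vsum: "(\<Sum>i<n. v j i) = 1" for j
    using s_pos[of "kj j"] by (simp add: v_def s_def[symmetric] sum_divide_distrib[symmetric])
  obtain h where h: "strict_mono h" "\<forall>i<n. convergent (\<lambda>j. v (h j) i)"
    using bw_multi[of n v 1] v_bd by auto
  define u where "u i = lim (\<lambda>j. v (h j) i)" for i
  have vu: "(\<lambda>j. v (h j) i) \<longlonglongrightarrow> u i" if "i < n" for i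
    using h(2) that by (simp add: u_def convergent_LIMSEQ_iff)
  have eps: "(\<lambda>j. inverse (real (Suc (h j)))) \<longlonglongrightarrow> 0"
    using LIMSEQ_subseq_LIMSEQ[OF LIMSEQ_inverse_real_of_nat h(1)] by (simp add: o_def)
  have r1: "(\<lambda>j. r (h j)) \<longlonglongrightarrow> 1"
  proof (rule tendsto_sandwich[of "\<lambda>_. 1" _ _ "\<lambda>j. 1 + inverse (real (Suc (h j)))"])
    show "\<forall>\<^sub>F j in sequentially. 1 \<le> r (h j)" using r_ge by (intro always_eventually allI)
    show "\<forall>\<^sub>F j in sequentially. r (h j) \<le> 1 + inverse (real (Suc (h j)))"
      using r_lt by (intro always_eventually allI less_imp_le)
    show "(\<lambda>j. 1 + inverse (real (Suc (h j)))) \<longlonglongrightarrow> 1"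
      using tendsto_add[OF tendsto_const eps, of 1] by simp
  qed simp
  have wu: "(\<lambda>j. w (h j) i) \<longlonglongrightarrow> u i" if i: "i < n" for i
  proof (rule tendsto_sandwich[of "\<lambda>j. v (h j) i - (r (h j) - 1)" _ _ "\<lambda>j. v (h j) i + (r (h j) - 1)"])
    show "\<forall>\<^sub>F j in sequentially. v (h j) i - (r (h j) - 1) \<le> w (h j) i"
    proof (intro always_eventually allI)
      fix j
      have "\<bar>v (h j) i - w (h j) i\<bar> \<le> r (h j) - 1" by (rule vw[OF i])
      then show "v (h j) i - (r (h j) - 1) \<le> w (h j) i" by (metis abs_le_D1 diff_le_eq add.commute)
    qed
    show "\<forall>\<^sub>F j in sequentially. w (h j) i \<le> v (h j) i + (r (h j) - 1)"
    proof (intro always_eventually allI)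
      fix j
      have "\<bar>v (h j) i - w (h j) i\<bar> \<le> r (h j) - 1" by (rule vw[OF i])
      then have "- (v (h j) i - w (h j) i) \<le> r (h j) - 1" by (rule abs_le_D2)
      then show "w (h j) i \<le> v (h j) i + (r (h j) - 1)" by linarith
    qed
    have "(\<lambda>j. r (h j) - 1) \<longlonglongrightarrow> 0" using tendsto_diff[OF r1 tendsto_const, of 1] by simp
    then show "(\<lambda>j. v (h j) i - (r (h j) - 1)) \<longlonglongrightarrow> u i"
      using tendsto_diff[OF vu[OF i]] by fastforce
    show "(\<lambda>j. v (h j) i + (r (h j) - 1)) \<longlonglongrightarrow> u i"
      using tendsto_add[OF vu[OF i]] \<open>(\<lambda>j. r (h j) - 1) \<longlonglongrightarrow> 0\<close> by fastforce
  qed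
  have ueq: "(\<Sum>l<n. a i l * u l) = u i" if i: "i < n" for i
  proof -
    have "(\<lambda>j. \<Sum>l<n. a i l * v (h j) l) \<longlonglongrightarrow> (\<Sum>l<n. a i l * u l)"
      by (intro tendsto_sum tendsto_mult_left vu) auto
    moreover have "(\<lambda>j. \<Sum>l<n. a i l * v (h j) l) \<longlonglongrightarrow> 1 * u i"
      unfolding Av by (intro tendsto_mult r1 wu i)
    ultimately have "(\<Sum>l<n. a i l * u l) = 1 * u i" by (rule LIMSEQ_unique)
    then show ?thesis by simp
  qed
  have usum: "(\<Sum>i<n. u i) = 1"
  proof -
    have "(\<lambda>j. \<Sum>i<n. v (h j) i) \<longlonglongrightarrow> (\<Sum>i<n. u i)" by (intro tendsto_sum vu) auto
    then have "(\<lambda>j. 1::real) \<longlonglongrightarrow> (\<Sum>i<n. u i)" unfolding vsum .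
    then show ?thesis using LIMSEQ_unique[OF tendsto_const] by metis
  qed
  have u_nonneg: "u i \<ge> 0" if i: "i < n" for i
  proof (rule LIMSEQ_le_const[OF vu[OF i]])
    have "0 \<le> v (h j) i" for j using it_nonneg[OF i, of "kj (h j)"] s_pos[of "kj (h j)"] by (simp add: v_def)
    then show "\<exists>N. \<forall>j\<ge>N. 0 \<le> v (h j) i" by blast
  qed
  define uv where "uv = vec n u"
  have "A *\<^sub>v uv = \<rho> \<cdot>\<^sub>v uv"
  proof (rule eq_vecI)
    fix i assume "i < dim_vec (\<rho> \<cdot>\<^sub>v uv)"
    then have i: "i < n" by (simp add: uv_def)
    have "(A *\<^sub>v uv) $ i = (\<Sum>l<n. A $$ (i,l) * uv $ l)" by (rule mv_index[OF A _ i]) (simp add: uv_def)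
    also have "\<dots> = \<rho> * (\<Sum>l<n. a i l * u l)" unfolding sum_distrib_left using \<rho>pos
      by (intro sum.cong) (auto simp: uv_def a_def)
    also have "\<dots> = \<rho> * u i" using ueq[OF i] by simp
    finally show "(A *\<^sub>v uv) $ i = (\<rho> \<cdot>\<^sub>v uv) $ i" using i by (simp add: uv_def)
  qed (use A in \<open>simp add: uv_def\<close>)
  moreover have "uv \<noteq> 0\<^sub>v n"
  proof
    assume "uv = 0\<^sub>v n"
    then have "u i = 0" if "i < n" for i using that by (metis uv_def index_vec index_zero_vec(1))
    then have "(\<Sum>i<n. u i) = 0" by simp
    then show False using usum by simp
  qed
  ultimately show ?thesis using u_nonneg unfolding \<rho>_def by (intro exI[of _ uv]) (auto simp: uv_def)
qed

lemma mm_index: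
  assumes "A \<in> carrier_mat nr m" "B \<in> carrier_mat m nc" "i < nr" "j < nc"
  shows "(A * B) $$ (i,j) = (\<Sum>k<m. A $$ (i,k) * B $$ (k,j))"
  using assms by (auto simp: scalar_prod_def lessThan_atLeast0 intro!: sum.cong)

lemma sum_split_add: "(\<Sum>c<m + k. f c) = (\<Sum>c<m. f c) + (\<Sum>j<k. f (m + j))" for m k :: nat
  by (induction k) (auto simp: add.assoc)

lemma sum_blocks: "(\<Sum>c<d * n. f c) = (\<Sum>q<d. \<Sum>j<n. f (q * n + j))" for d n :: nat
proof (induction d)
  case (Suc d)
  have "(\<Sum>c<Suc d * n. f c) = (\<Sum>c<d * n + n. f c)" by (simp add: add.commute)
  also have "\<dots> = (\<Sum>c<d * n. f c) + (\<Sum>j<n. f (d * n + j))" by (rule sum_split_add)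
  finally show ?case using Suc by simp
qed simp

lemma blk_div: "j < (n::nat) \<Longrightarrow> (q * n + j) div n = q"
  by simp

lemma blk_mod: "j < (n::nat) \<Longrightarrow> (q * n + j) mod n = j"
  by simp

lemma blk_lt: "p < d \<Longrightarrow> i < (n::nat) \<Longrightarrow> p * n + i < d * n"
proof -
  assume "p < d" "i < n"
  then have "p * n + i < Suc p * n" by simp
  also have "\<dots> \<le> d * n" using \<open>p < d\<close> by (intro mult_le_mono1) simp
  finally show ?thesis .
qed

lemma foldr_index:
  "(\<forall>B\<in>set Bs. B \<in> carrier_mat n n) \<Longrightarrow> foldr (+) Bs (0\<^sub>m n n) \<in> carrier_mat n n \<and>
    (\<forall>i<n. \<forall>j<n. foldr (+) Bs (0\<^sub>m n n) $$ (i,j) = (\<Sum>p<length Bs. (Bs!p) $$ (i,j)))"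
  by (induction Bs) (auto simp del: sum.lessThan_Suc simp add: sum.lessThan_Suc_shift)

theorem lemma3p1:
  fixes n :: nat and BJ :: "real mat" and Bs :: "real mat list"
  assumes BJ_carrier: "BJ \<in> carrier_mat n n"
    and BJ_nonneg: "\<forall>i < n. \<forall>j < n. BJ $$ (i, j) \<ge> 0"
    and split: "is_splitting n BJ Bs"
    and pos: "rho (iter_mat n Bs) > 0"
  shows "\<exists>v. eigenvector (iter_mat n Bs) v (rho (iter_mat n Bs)) \<and>
           (\<forall>k < length Bs * n. v $ k \<ge> 0) \<and>
           (rho (iter_mat n Bs) \<le> 1 \<longrightarrow>
              (\<forall>i < n. rho (iter_mat n Bs) * v $ i \<le> v $ ((length Bs - 1) * n + i) \<and>
                 (\<forall>p. p + 1 < length Bs \<longrightarrow> v $ ((p + 1) * n + i) \<le> v $ (p * n + i)))) \<and>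
           (rho (iter_mat n Bs) \<ge> 1 \<longrightarrow>
              (\<forall>i < n. v $ ((length Bs - 1) * n + i) \<le> rho (iter_mat n Bs) * v $ i \<and>
                 (\<forall>p. p + 1 < length Bs \<longrightarrow> v $ (p * n + i) \<le> v $ ((p + 1) * n + i))))"
proof -
  define d where "d = length Bs"
  define N where "N = d * n"
  note spl = split[unfolded is_splitting_def]
  have d1: "d \<ge> 1" using spl d_def by simp
  have Bc: "Bs ! p \<in> carrier_mat n n" if "p < d" for p using spl that d_def by auto
  have n0: "n > 0"
  proof (rule ccontr)
    assume "\<not> n > 0" then have "n = 0" by simp
    have "Bs ! 0 = 0\<^sub>m n n" using Bc[of 0] d1 \<open>n = 0\<close> by (intro eq_matI) auto
    moreover have "0 < length Bs" using d1 d_def by linarith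
    then have "Bs ! 0 \<noteq> 0\<^sub>m n n" using spl by blast
    ultimately show False by simp
  qed
  have N0: "N > 0" using n0 d1 by (simp add: N_def)
  have allc: "\<forall>B\<in>set Bs. B \<in> carrier_mat n n" using Bc d_def by (auto simp: in_set_conv_nth)
  have BJsum: "BJ $$ (i,j) = (\<Sum>p<d. (Bs ! p) $$ (i,j))" if "i < n" "j < n" for i j
    using foldr_index[OF allc] spl that d_def by auto
  have Bnn: "(Bs ! p) $$ (i,j) \<ge> 0" if p: "p < d" and ij: "i < n" "j < n" for p i j
  proof (cases "(Bs ! p) $$ (i,j) = 0")
    case False
    have z: "(Bs ! q) $$ (i,j) = 0" if "q < d" "q \<noteq> p" for q
      using spl that p ij False d_def by fastforce
    have "BJ $$ (i,j) = (Bs ! p) $$ (i,j) + (\<Sum>q\<in>{..<d} - {p}. (Bs ! q) $$ (i,j))"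
      unfolding BJsum[OF ij] using p by (intro sum.remove) auto
    also have "(\<Sum>q\<in>{..<d} - {p}. (Bs ! q) $$ (i,j)) = 0" using z by (intro sum.neutral) auto
    finally have eqB: "BJ $$ (i,j) = (Bs ! p) $$ (i,j)" by simp
    have "0 \<le> BJ $$ (i,j)" using BJ_nonneg ij(1) ij(2) by blast
    then show ?thesis unfolding eqB .
  qed simp
  define L where "L = blockL n Bs"
  define U where "U = blockU n Bs"
  have Lc: "L \<in> carrier_mat N N" by (simp add: L_def blockL_def N_def d_def)
  have Uc: "U \<in> carrier_mat N N" by (simp add: U_def blockU_def N_def d_def)
  have cdiv: "c div n < d" "c mod n < n" if "c < N" for c
    using that n0 by (auto simp: N_def less_mult_imp_div_less)
  have Lent: "L $$ (r,c) = (if c div n < r div n then (Bs ! (c div n)) $$ (r mod n, c mod n) else 0)"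
    if "r < N" "c < N" for r c using that by (simp add: L_def blockL_def N_def d_def)
  have Uent: "U $$ (r,c) = (if r div n \<le> c div n then (Bs ! (c div n)) $$ (r mod n, c mod n) else 0)"
    if "r < N" "c < N" for r c using that by (simp add: U_def blockU_def N_def d_def)
  have Lnn: "L $$ (r,c) \<ge> 0" if "r < N" "c < N" for r c
    using Lent[OF that] Bnn cdiv that by auto
  have Unn: "U $$ (r,c) \<ge> 0" if "r < N" "c < N" for r c
    using Uent[OF that] Bnn cdiv that by auto
  have Llow: "L $$ (r,c) = 0" if "r < N" "c < N" "r \<le> c" for r c
    using Lent[OF that(1,2)] div_le_mono[OF that(3), of n] by auto
  define IL where "IL = 1\<^sub>m N - L"
  have ILc: "IL \<in> carrier_mat N N" using Lc unfolding IL_def by (intro minus_carrier_mat) auto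
  have ILent: "IL $$ (r,c) = (if r = c then 1 else 0) - L $$ (r,c)" if "r < N" "c < N" for r c
    using that Lc by (simp add: IL_def)
  have "det IL = prod_list (diag_mat IL)"
    by (rule det_lower_triangular[OF _ ILc]) (use ILent Llow in auto)
  also have "diag_mat IL = diag_mat (1\<^sub>m N)"
    using ILc Llow ILent by (auto simp: diag_mat_def)
  finally have "det IL = 1" by simp
  then have "IL \<in> Units (ring_mat TYPE(real) N undefined)"
    by (intro det_non_zero_imp_unit[OF ILc]) simp
  then obtain Mi where Mi: "Mi \<in> carrier_mat N N" "Mi * IL = 1\<^sub>m N" "IL * Mi = 1\<^sub>m N"
    by (auto simp: Units_def ring_mat_simps)
  have invIL: "inv_mat IL = Mi"
    unfolding inv_mat_def
  proof (rule the_equality)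
    show "Mi \<in> carrier_mat (dim_row IL) (dim_row IL) \<and> IL * Mi = 1\<^sub>m (dim_row IL) \<and> Mi * IL = 1\<^sub>m (dim_row IL)"
      using Mi ILc by simp
    fix X assume X: "X \<in> carrier_mat (dim_row IL) (dim_row IL) \<and> IL * X = 1\<^sub>m (dim_row IL) \<and> X * IL = 1\<^sub>m (dim_row IL)"
    then have Xc: "X \<in> carrier_mat N N" and X1: "IL * X = 1\<^sub>m N" using ILc by auto
    have "X = (Mi * IL) * X" using Mi Xc by simp
    also have "\<dots> = Mi * (IL * X)" using Mi Xc ILc by (intro assoc_mult_mat) auto
    also have "\<dots> = Mi" using X1 Mi by simp
    finally show "X = Mi" .
  qed
  have Meq: "Mi $$ (r,c) = (if r = c then 1 else 0) + (\<Sum>s<N. L $$ (r,s) * Mi $$ (s,c))"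
    if rc: "r < N" "c < N" for r c
  proof -
    have "(if r = c then 1 else 0) = (IL * Mi) $$ (r,c)" using Mi rc by simp
    also have "\<dots> = (\<Sum>s<N. IL $$ (r,s) * Mi $$ (s,c))" by (rule mm_index[OF ILc Mi(1) rc])
    also have "\<dots> = (\<Sum>s<N. (if s = r then Mi $$ (s,c) else 0) - L $$ (r,s) * Mi $$ (s,c))"
      using rc by (intro sum.cong) (auto simp: ILent left_diff_distrib)
    also have "\<dots> = Mi $$ (r,c) - (\<Sum>s<N. L $$ (r,s) * Mi $$ (s,c))"
      using rc by (simp add: sum_subtractf)
    finally show ?thesis by simp
  qed
  have Mnn: "Mi $$ (r,c) \<ge> 0" if "r < N" "c < N" for r c
    using that(1)
  proof (induction r rule: less_induct)
    case (less r)
    have "0 \<le> (\<Sum>s<N. L $$ (r,s) * Mi $$ (s,c))"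
    proof (intro sum_nonneg)
      fix s assume s: "s \<in> {..<N}"
      show "0 \<le> L $$ (r,s) * Mi $$ (s,c)"
      proof (cases "r \<le> s")
        case True then show ?thesis using Llow less.prems s by simp
      next
        case False then show ?thesis using less.IH[of s] Lnn[of r s] less.prems s by simp
      qed
    qed
    then show ?case unfolding Meq[OF less.prems that(2)] by simp
  qed
  define T where "T = Mi * U"
  have Tc: "T \<in> carrier_mat N N" using Mi Uc by (simp add: T_def)
  have Tdef: "iter_mat n Bs = T"
  proof -
    have "inv_mat (1\<^sub>m (length Bs * n) - blockL n Bs) = Mi" using invIL by (simp add: IL_def N_def d_def L_def)
    then show ?thesis by (simp add: iter_mat_def T_def U_def)
  qed
  have Tnn: "T $$ (r,c) \<ge> 0" if "r < N" "c < N" for r c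
    unfolding T_def mm_index[OF Mi(1) Uc that] using that Mnn Unn by (intro sum_nonneg mult_nonneg_nonneg) auto
  define \<rho> where "\<rho> = rho T"
  have \<rho>pos: "\<rho> > 0" using pos by (simp add: Tdef \<rho>_def)
  obtain v where vc: "v \<in> carrier_vec N" and v0: "v \<noteq> 0\<^sub>v N" and vev: "T *\<^sub>v v = \<rho> \<cdot>\<^sub>v v"
    and vnn: "\<forall>i<N. v $ i \<ge> 0"
    using pf_weak[OF Tc N0 Tnn \<rho>pos[unfolded \<rho>_def]] unfolding \<rho>_def by blast
  have ILT: "IL * T = U"
  proof -
    have "IL * T = (IL * Mi) * U" unfolding T_def using ILc Mi Uc by (intro assoc_mult_mat[symmetric]) auto
    then show ?thesis using Mi Uc by simp
  qed
  have Eq: "(\<Sum>c<N. U $$ (r,c) * v $ c) = \<rho> * v $ r - \<rho> * (\<Sum>c<N. L $$ (r,c) * v $ c)"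
    if r: "r < N" for r
  proof -
    have "(\<Sum>c<N. U $$ (r,c) * v $ c) = (U *\<^sub>v v) $ r" by (rule mv_index[OF Uc vc r, symmetric])
    also have "U *\<^sub>v v = IL *\<^sub>v (T *\<^sub>v v)" unfolding ILT[symmetric] using ILc Tc vc
      by (intro assoc_mult_mat_vec) auto
    also have "\<dots> = IL *\<^sub>v (\<rho> \<cdot>\<^sub>v v)" by (simp add: vev)
    also have "\<dots> $ r = (\<Sum>s<N. IL $$ (r,s) * (\<rho> \<cdot>\<^sub>v v) $ s)" using vc by (intro mv_index[OF ILc _ r]) auto
    also have "\<dots> = (\<Sum>s<N. (if s = r then \<rho> * v $ s else 0) - \<rho> * (L $$ (r,s) * v $ s))"
      using r vc by (intro sum.cong) (auto simp: ILent algebra_simps)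
    also have "\<dots> = \<rho> * v $ r - \<rho> * (\<Sum>c<N. L $$ (r,c) * v $ c)"
      using r by (simp add: sum_subtractf sum_distrib_left)
    finally show ?thesis .
  qed
  define W where "W q i = (\<Sum>j<n. (Bs ! q) $$ (i,j) * v $ (q * n + j))" for q i
  have Wnn: "W q i \<ge> 0" if "q < d" "i < n" for q i
    unfolding W_def using that Bnn vnn blk_lt[of q d _ n] by (auto simp: N_def intro!: sum_nonneg)
  have Ublk: "(\<Sum>c<N. U $$ (p * n + i, c) * v $ c) = (\<Sum>q<d. if p \<le> q then W q i else 0)"
    if p: "p < d" and i: "i < n" for p i
  proof -
    have "(\<Sum>c<N. U $$ (p * n + i, c) * v $ c) = (\<Sum>q<d. \<Sum>j<n. U $$ (p * n + i, q * n + j) * v $ (q * n + j))"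
      unfolding N_def by (rule sum_blocks)
    also have "\<dots> = (\<Sum>q<d. if p \<le> q then W q i else 0)"
      using p i blk_lt[OF p i] by (intro sum.cong) (auto simp: W_def Uent N_def blk_lt blk_div blk_mod)
    finally show ?thesis .
  qed
  have Lblk: "(\<Sum>c<N. L $$ (p * n + i, c) * v $ c) = (\<Sum>q<d. if q < p then W q i else 0)"
    if p: "p < d" and i: "i < n" for p i
  proof -
    have "(\<Sum>c<N. L $$ (p * n + i, c) * v $ c) = (\<Sum>q<d. \<Sum>j<n. L $$ (p * n + i, q * n + j) * v $ (q * n + j))"
      unfolding N_def by (rule sum_blocks)
    also have "\<dots> = (\<Sum>q<d. if q < p then W q i else 0)"
      using p i blk_lt[OF p i] by (intro sum.cong) (auto simp: W_def Lent N_def blk_lt blk_div blk_mod)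
    finally show ?thesis .
  qed
  define G where "G p i = (\<Sum>q<d. if p \<le> q then W q i else \<rho> * W q i)" for p i
  have E: "\<rho> * v $ (p * n + i) = G p i" if p: "p < d" and i: "i < n" for p i
  proof -
    have "(\<Sum>q<d. if p \<le> q then W q i else 0) = \<rho> * v $ (p * n + i) - \<rho> * (\<Sum>q<d. if q < p then W q i else 0)"
      using Eq[of "p * n + i"] Ublk[OF p i] Lblk[OF p i] blk_lt[OF p i] by (simp add: N_def)
    moreover have "G p i = (\<Sum>q<d. if p \<le> q then W q i else 0) + \<rho> * (\<Sum>q<d. if q < p then W q i else 0)"
      unfolding G_def sum_distrib_left sum.distrib[symmetric] by (intro sum.cong) auto
    ultimately show ?thesis by simp
  qed
  have Gstep: "G (Suc p) i = G p i + (\<rho> - 1) * W p i" if p: "p < d" for p i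
  proof -
    have "G (Suc p) i - G p i = (\<Sum>q<d. if q = p then (\<rho> - 1) * W q i else 0)"
      unfolding G_def sum_subtractf[symmetric] by (intro sum.cong) (auto simp: algebra_simps)
    also have "\<dots> = (\<rho> - 1) * W p i" using p by (simp add: sum.delta)
    finally show ?thesis by simp
  qed
  have G0: "G 0 i = (\<Sum>q<d. W q i)" for i by (simp add: G_def)
  have vN: "v $ k \<ge> 0" if "k < d * n" for k using vnn that by (simp add: N_def)
  have ev: "eigenvector (iter_mat n Bs) v (rho (iter_mat n Bs))"
    unfolding Tdef eigenvector_def using Tc vc v0 vev \<rho>_def by simp
  have case1: "\<rho> * v $ i \<le> v $ ((d - 1) * n + i) \<and>
                 (\<forall>p. p + 1 < d \<longrightarrow> v $ ((p + 1) * n + i) \<le> v $ (p * n + i))"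
    if le: "\<rho> \<le> 1" and i: "i < n" for i
  proof (intro conjI allI impI)
    fix p assume p: "p + 1 < d"
    have "\<rho> * v $ ((p + 1) * n + i) = G (Suc p) i" using E[of "p+1" i] p i by simp
    also have "\<dots> = G p i + (\<rho> - 1) * W p i" using Gstep p by simp
    also have "\<dots> \<le> G p i" using le Wnn[of p i] p i by (simp add: mult_nonpos_nonneg)
    also have "\<dots> = \<rho> * v $ (p * n + i)" using E[of p i] p i by simp
    finally show "v $ ((p + 1) * n + i) \<le> v $ (p * n + i)" using \<rho>pos by simp
  next
    have "\<rho> * (\<rho> * v $ i) = \<rho> * G 0 i" using E[of 0 i] d1 i by simp
    also have "\<dots> = (\<Sum>q<d. \<rho> * W q i)" by (simp add: G0 sum_distrib_left)
    also have "\<dots> \<le> G (d - 1) i" unfolding G_def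
      using le Wnn \<rho>pos i by (intro sum_mono) (auto simp: mult_left_le_one_le)
    also have "\<dots> = \<rho> * v $ ((d - 1) * n + i)" using E[of "d - 1" i] d1 i by simp
    finally show "\<rho> * v $ i \<le> v $ ((d - 1) * n + i)" using \<rho>pos by simp
  qed
  have case2: "v $ ((d - 1) * n + i) \<le> \<rho> * v $ i \<and>
                 (\<forall>p. p + 1 < d \<longrightarrow> v $ (p * n + i) \<le> v $ ((p + 1) * n + i))"
    if ge: "\<rho> \<ge> 1" and i: "i < n" for i
  proof (intro conjI allI impI)
    fix p assume p: "p + 1 < d"
    have "\<rho> * v $ (p * n + i) = G p i" using E[of p i] p i by simp
    also have "\<dots> \<le> G p i + (\<rho> - 1) * W p i" using ge Wnn[of p i] p i by simp
    also have "\<dots> = G (Suc p) i" using Gstep p by simp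
    also have "\<dots> = \<rho> * v $ ((p + 1) * n + i)" using E[of "p+1" i] p i by simp
    finally show "v $ (p * n + i) \<le> v $ ((p + 1) * n + i)" using \<rho>pos by simp
  next
    have "\<rho> * v $ ((d - 1) * n + i) = G (d - 1) i" using E[of "d - 1" i] d1 i by simp
    also have "\<dots> \<le> (\<Sum>q<d. \<rho> * W q i)" unfolding G_def
    proof (intro sum_mono)
      fix q assume "q \<in> {..<d}"
      then have "1 * W q i \<le> \<rho> * W q i" using Wnn[of q i] i ge by (intro mult_right_mono) auto
      then show "(if d - 1 \<le> q then W q i else \<rho> * W q i) \<le> \<rho> * W q i" by simp
    qed
    also have "\<dots> = \<rho> * G 0 i" by (simp add: G0 sum_distrib_left)
    also have "\<dots> = \<rho> * (\<rho> * v $ i)" using E[of 0 i] d1 i by simp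
    finally show "v $ ((d - 1) * n + i) \<le> \<rho> * v $ i" using \<rho>pos by simp
  qed
  show ?thesis
    using ev vN case1 case2 unfolding Tdef \<rho>_def[symmetric] d_def[symmetric] by blast
qed

end
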